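(* $\mathcal{H}_{N}'$ is generated as a Lie algebra by the elements $h_{\pm e_i}$ ($1\le i\le N$) and $h_{\pm e_j\pm e_k}$ ($1\le j<k\le N$).
   Context: $\mathbb{K}$ is an algebraically closed field of characteristic zero, $N=2m\ge2$ even, $e_1,\dots,e_N$ the standard basis of $\mathbb{Z}^N\subset\mathbb{K}^N$, $(\cdot,\cdot)$ the bilinear form with $(e_i,e_j)=\delta_{ij}$. Let $A_N=\mathbb{K}[t_1^{\pm1},\dots,t_N^{\pm1}]$, $d_i=t_i\frac{\partial}{\partial t_i}$, $t^{\bm r}=t_1^{r_1}\cdots t_N^{r_N}$, $D(u,\bm r)=\sum_i u_it^{\bm r}d_i$. Let $\bm J=\begin{pmatrix} O_m & I_m\\ -I_m & O_m\end{pmatrix}$, $\overline{\bm r}=\bm J\bm r$, $h_{\bm r}=D(\overline{\bm r},\bm r)$ (so $h_{\bm 0}=0$). $\mathcal{H}_N'=\operatorname{span}_{\mathbb{K}}\{h_{\bm r}:\bm r\in\mathbb{Z}^N\setminus\{\bm0\}\}$ is the Lie algebra with bracket $[h_{\bm r},h_{\bm s}]=(\overline{\bm r},\bm s)h_{\bm r+\bm s}$ (derived subalgebra of the Hamiltonian Lie algebra). *)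

theory Defs
  imports "HOL-Computational_Algebra.Polynomial"
begin

text \<open>Vectors of Z^N (N = 2m) are functions nat => int vanishing outside {0..<2m}
  (coordinates indexed 0..2m-1).\<close>

definition lat :: "nat \<Rightarrow> (nat \<Rightarrow> int) set" where
  "lat m = {r. \<forall>i. 2*m \<le> i \<longrightarrow> r i = 0}"

definition zerov :: "nat \<Rightarrow> int" where "zerov = (\<lambda>_. 0)"

definition vadd :: "(nat \<Rightarrow> int) \<Rightarrow> (nat \<Rightarrow> int) \<Rightarrow> (nat \<Rightarrow> int)" where
  "vadd r s = (\<lambda>i. r i + s i)"

definition vsmult :: "int \<Rightarrow> (nat \<Rightarrow> int) \<Rightarrow> (nat \<Rightarrow> int)" where
  "vsmult c r = (\<lambda>i. c * r i)"

definition unitv :: "nat \<Rightarrow> (nat \<Rightarrow> int)" where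
  "unitv i = (\<lambda>j. if j = i then 1 else 0)"

text \<open>rbar = J r with J = [[0, I_m], [-I_m, 0]].\<close>
definition Jb :: "nat \<Rightarrow> (nat \<Rightarrow> int) \<Rightarrow> (nat \<Rightarrow> int)" where
  "Jb m r = (\<lambda>i. if i < m then r (i + m) else if i < 2*m then - r (i - m) else 0)"

definition bil :: "nat \<Rightarrow> (nat \<Rightarrow> int) \<Rightarrow> (nat \<Rightarrow> int) \<Rightarrow> int" where
  "bil m r s = (\<Sum>i<2*m. r i * s i)"

text \<open>H_N' realised via its basis {h_r : r in Z^N, r \<noteq> 0}: an element is a finitely
  supported coefficient function on Z^N \ {0}.\<close>
definition hamH :: "nat \<Rightarrow> ((nat \<Rightarrow> int) \<Rightarrow> 'a::field) set" where
  "hamH m = {f. finite {r. f r \<noteq> 0} \<and> (\<forall>r. f r \<noteq> 0 \<longrightarrow> r \<in> lat m \<and> r \<noteq> zerov)}"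

definition hb :: "(nat \<Rightarrow> int) \<Rightarrow> ((nat \<Rightarrow> int) \<Rightarrow> 'a::field)" where
  "hb r = (\<lambda>s. if s = r then 1 else 0)"

text \<open>Bilinear extension of [h_r, h_s] = (rbar, s) h_(r+s).\<close>
definition hbr :: "nat \<Rightarrow> ((nat \<Rightarrow> int) \<Rightarrow> 'a::field) \<Rightarrow> ((nat \<Rightarrow> int) \<Rightarrow> 'a)
    \<Rightarrow> ((nat \<Rightarrow> int) \<Rightarrow> 'a)" where
  "hbr m f g = (\<lambda>t. \<Sum>p\<in>{(r, s). f r \<noteq> 0 \<and> g s \<noteq> 0 \<and> vadd r s = t}.
      of_int (bil m (Jb m (fst p)) (snd p)) * f (fst p) * g (snd p))"

inductive_set lie_gen :: "nat \<Rightarrow> ((nat \<Rightarrow> int) \<Rightarrow> 'a::field) set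
    \<Rightarrow> ((nat \<Rightarrow> int) \<Rightarrow> 'a) set"
  for m :: nat and S :: "((nat \<Rightarrow> int) \<Rightarrow> 'a) set" where
  base: "x \<in> S \<Longrightarrow> x \<in> lie_gen m S"
| zero: "(\<lambda>_. 0) \<in> lie_gen m S"
| add: "x \<in> lie_gen m S \<Longrightarrow> y \<in> lie_gen m S \<Longrightarrow> (\<lambda>r. x r + y r) \<in> lie_gen m S"
| smult: "x \<in> lie_gen m S \<Longrightarrow> (\<lambda>r. c * x r) \<in> lie_gen m S"
| bracket: "x \<in> lie_gen m S \<Longrightarrow> y \<in> lie_gen m S \<Longrightarrow> hbr m x y \<in> lie_gen m S"

definition gens :: "nat \<Rightarrow> ((nat \<Rightarrow> int) \<Rightarrow> 'a::field) set" where
  "gens m = {hb (vsmult a (unitv i)) | a i. a \<in> {1, -1} \<and> i < 2*m}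
     \<union> {hb (vadd (vsmult a (unitv j)) (vsmult b (unitv k))) | a b j k.
          a \<in> {1, -1} \<and> b \<in> {1, -1} \<and> j < k \<and> k < 2*m}"

end

theory Submission
  imports Defs
begin
lemma sum_split_add: "(\<Sum>i<a+n. f i) = (\<Sum>i<a. f i) + (\<Sum>i<n. f (i+a)) " for f :: "nat \<Rightarrow> 'b::comm_monoid_add"
  by (induction n) (simp_all add: add_ac)

definition om :: "nat \<Rightarrow> (nat \<Rightarrow> int) \<Rightarrow> (nat \<Rightarrow> int) \<Rightarrow> int" where
  "om m s r = bil m (Jb m s) r"

lemma om_closed: "om m s r = (\<Sum>i<m. s (i+m) * r i - s i * r (i+m))"
proof -
  have "om m s r = (\<Sum>i<m+m. Jb m s i * r i)" by (simp add: om_def bil_def mult_2)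
  also have "\<dots> = (\<Sum>i<m. Jb m s i * r i) + (\<Sum>i<m. Jb m s (i+m) * r (i+m))"
    by (rule sum_split_add)
  also have "\<dots> = (\<Sum>i<m. s (i+m) * r i) + (\<Sum>i<m. - s i * r (i+m))"
    by (simp add: Jb_def)
  finally show ?thesis by (simp add: sum_subtractf sum_negf)
qed

lemma om_add: "om m (vadd s t) r = om m s r + om m t r"
  by (simp add: om_closed vadd_def sum.distrib[symmetric] algebra_simps)

definition pt :: "nat \<Rightarrow> nat \<Rightarrow> nat" where "pt m k = (if k < m then k + m else k - m)"
definition sg :: "nat \<Rightarrow> nat \<Rightarrow> int" where "sg m k = (if k < m then -1 else 1)"

lemma om_unit: assumes "k < 2*m" shows "om m (vsmult c (unitv k)) r = c * sg m k * r (pt m k)"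
proof (cases "k < m")
  case True
  have "om m (vsmult c (unitv k)) r = (\<Sum>i<m. (if i = k then - c * r (k+m) else 0))"
    unfolding om_closed using True by (intro sum.cong) (auto simp: vsmult_def unitv_def)
  also have "\<dots> = - c * r (k+m)" using True by simp
  finally show ?thesis using True by (simp add: sg_def pt_def)
next
  case False
  have "om m (vsmult c (unitv k)) r = (\<Sum>i<m. (if i = k - m then c * r (k-m) else 0))"
    unfolding om_closed using False by (intro sum.cong) (auto simp: vsmult_def unitv_def)
  also have "\<dots> = c * r (k-m)" using False assms by simp
  finally show ?thesis using False by (simp add: sg_def pt_def)
qed

lemma om_neg_self: "om m r (\<lambda>i. - r i) = 0"
  by (simp add: om_closed algebra_simps)

lemma pt_lt: "k < 2*m \<Longrightarrow> pt m k < 2*m" unfolding pt_def by arith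
lemma pt_pt: "k < 2*m \<Longrightarrow> pt m (pt m k) = k" unfolding pt_def by arith
lemma pt_ne: "k < 2*m \<Longrightarrow> pt m k \<noteq> k" unfolding pt_def by arith
lemma sg_pt: "k < 2*m \<Longrightarrow> sg m (pt m k) = - sg m k" unfolding pt_def sg_def by auto
lemma sg_ne: "sg m k \<noteq> 0" by (simp add: sg_def)

lemma hbr_hb: "hbr m (hb s) (hb t) = (\<lambda>u. (of_int (om m s t) :: 'a::field) * hb (vadd s t) u)"
proof
  fix u
  have e: "{(r, s'). (hb s r :: 'a) \<noteq> 0 \<and> (hb t s' :: 'a) \<noteq> 0 \<and> vadd r s' = u}
       = (if vadd s t = u then {(s,t)} else {})"
    by (auto simp: hb_def)
  show "hbr m (hb s) (hb t) u = (of_int (om m s t) :: 'a) * hb (vadd s t) u"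
    unfolding hbr_def e by (auto simp: hb_def om_def)
qed

lemma close:
  assumes "(hb s :: _ \<Rightarrow> 'a::field_char_0) \<in> lie_gen m S" "(hb t :: _ \<Rightarrow> 'a) \<in> lie_gen m S"
    and "om m s t \<noteq> 0"
  shows "(hb (vadd s t) :: _ \<Rightarrow> 'a) \<in> lie_gen m S"
proof -
  have "hbr m (hb s) (hb t :: _ \<Rightarrow> 'a) \<in> lie_gen m S" using assms by (intro lie_gen.bracket)
  then have "(\<lambda>r. inverse (of_int (om m s t) :: 'a) * hbr m (hb s) (hb t :: _ \<Rightarrow> 'a) r) \<in> lie_gen m S"
    by (rule lie_gen.smult)
  also have "(\<lambda>r. inverse (of_int (om m s t) :: 'a) * hbr m (hb s) (hb t :: _ \<Rightarrow> 'a) r) = hb (vadd s t)"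
  proof
    fix r
    have nz: "(of_int (om m s t) :: 'a) \<noteq> 0" using assms(3) by simp
    show "inverse (of_int (om m s t) :: 'a) * hbr m (hb s) (hb t :: _ \<Rightarrow> 'a) r = hb (vadd s t) r"
      using nz by (simp add: hbr_hb mult.assoc[symmetric])
  qed
  finally show ?thesis .
qed

lemma span:
  assumes "finite A" "\<forall>r\<in>A. (hb r :: _ \<Rightarrow> 'a::field) \<in> lie_gen m G" "{r. f r \<noteq> 0} \<subseteq> A"
  shows "(f :: _ \<Rightarrow> 'a) \<in> lie_gen m G"
  using assms
proof (induction A arbitrary: f rule: finite_induct)
  case empty
  then have "f = (\<lambda>_. 0)" by auto
  then show ?case using lie_gen.zero by simp
next
  case (insert a A)
  define g where "g = f(a := 0)"
  have "g \<in> lie_gen m G" using insert by (intro insert.IH) (auto simp: g_def)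
  moreover have "(\<lambda>r. f a * hb a r) \<in> lie_gen m G" using insert by (intro lie_gen.smult) auto
  ultimately have "(\<lambda>r. g r + f a * hb a r) \<in> lie_gen m G" by (rule lie_gen.add)
  also have "(\<lambda>r. g r + f a * hb a r) = f" by (auto simp: g_def hb_def)
  finally show ?case .
qed

definition nrm :: "nat \<Rightarrow> (nat \<Rightarrow> int) \<Rightarrow> int" where "nrm m r = (\<Sum>i<2*m. \<bar>r i\<bar>)"
definition paired :: "nat \<Rightarrow> (nat \<Rightarrow> int) \<Rightarrow> bool" where
  "paired m r = (\<exists>k<2*m. r k \<noteq> 0 \<and> r (pt m k) \<noteq> 0)"
definition mu :: "nat \<Rightarrow> (nat \<Rightarrow> int) \<Rightarrow> nat" where
  "mu m r = nat (2 * nrm m r) + (if paired m r then 0 else 1)"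

lemma nrm_nonneg: "nrm m r \<ge> 0" by (simp add: nrm_def sum_nonneg)

lemma nrm_upd: assumes "k < 2*m" shows "nrm m (r(k:=x)) = nrm m r - \<bar>r k\<bar> + \<bar>x\<bar>"
proof -
  have k: "k \<in> {..<2*m}" using assms by simp
  have "nrm m (r(k:=x)) = \<bar>x\<bar> + (\<Sum>i\<in>{..<2*m}-{k}. \<bar>(r(k:=x)) i\<bar>)"
    unfolding nrm_def using sum.remove[OF _ k, of "\<lambda>i. \<bar>(r(k:=x)) i\<bar>"] by simp
  also have "(\<Sum>i\<in>{..<2*m}-{k}. \<bar>(r(k:=x)) i\<bar>) = (\<Sum>i\<in>{..<2*m}-{k}. \<bar>r i\<bar>)"
    by (intro sum.cong) auto
  also have "\<dots> = nrm m r - \<bar>r k\<bar>"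
    unfolding nrm_def using sum.remove[OF _ k, of "\<lambda>i. \<bar>r i\<bar>"] by simp
  finally show ?thesis by linarith
qed

lemma lat_upd: "r \<in> lat m \<Longrightarrow> k < 2*m \<Longrightarrow> r(k:=x) \<in> lat m"
  by (auto simp: lat_def)

lemma gen1: "a \<in> {1,-1} \<Longrightarrow> i < 2*m \<Longrightarrow> (hb (vsmult a (unitv i)) :: _ \<Rightarrow> 'a::field) \<in> lie_gen m (gens m)"
  unfolding gens_def by (intro lie_gen.base) blast

lemma vadd_comm: "vadd x y = vadd y x" by (auto simp: vadd_def)

lemma gen2: assumes "a \<in> {1,-1}" "b \<in> {1,-1}" "j \<noteq> k" "j < 2*m" "k < 2*m"
  shows "(hb (vadd (vsmult a (unitv j)) (vsmult b (unitv k))) :: _ \<Rightarrow> 'a::field) \<in> lie_gen m (gens m)"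
proof (cases "j < k")
  case True
  then show ?thesis using assms unfolding gens_def by (intro lie_gen.base) blast
next
  case False
  then have "k < j" using assms by simp
  then have "(hb (vadd (vsmult b (unitv k)) (vsmult a (unitv j))) :: _ \<Rightarrow> 'a::field) \<in> lie_gen m (gens m)"
    using assms unfolding gens_def by (intro lie_gen.base) blast
  then show ?thesis by (simp add: vadd_comm)
qed

lemma main:
  fixes r :: "nat \<Rightarrow> int"
  assumes "r \<in> lat m" "r \<noteq> zerov"
  shows "(hb r :: _ \<Rightarrow> 'a::field_char_0) \<in> lie_gen m (gens m)"
  using assms
proof (induction r rule: measure_induct_rule[where f="mu m"])
  case (less r)
  let ?L = "lie_gen m (gens m) :: ((nat\<Rightarrow>int) \<Rightarrow> 'a) set"
  have IH: "\<And>w. w \<in> lat m \<Longrightarrow> w \<noteq> zerov \<Longrightarrow> mu m w < mu m r \<Longrightarrow> (hb w :: _ \<Rightarrow> 'a) \<in> ?L"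
    using less.IH by blast
  have rl: "r \<in> lat m" and rz: "r \<noteq> zerov" using less.prems by auto
  have "\<exists>k<2*m. r k \<noteq> 0"
  proof (rule ccontr)
    assume "\<not> ?thesis"
    then have "r = zerov" using rl by (auto simp: lat_def zerov_def fun_eq_iff not_less)
    then show False using rz by simp
  qed
  then obtain k where k: "k < 2*m" "r k \<noteq> 0" by blast
  have n1: "nrm m r \<ge> \<bar>r k\<bar>" using nrm_upd[OF k(1), of r 0] nrm_nonneg[of m "r(k:=0)"] by simp
  show ?case
  proof (cases "paired m r")
    case True
    then obtain k where k: "k<2*m" "r k \<noteq> 0" "r (pt m k) \<noteq> 0" by (auto simp: paired_def)
    define c where "c = sgn (r k)"
    define w where "w = r(k := r k - c)"
    have c: "c \<in> {1,-1}" using k by (auto simp: c_def sgn_if)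
    have gs: "(hb (vsmult c (unitv k)) :: _ \<Rightarrow> 'a) \<in> ?L" by (rule gen1[OF c k(1)])
    have wl: "w \<in> lat m" unfolding w_def using rl k(1) by (rule lat_upd)
    have wp: "w (pt m k) = r (pt m k)" using pt_ne[OF k(1)] by (simp add: w_def)
    have wz: "w \<noteq> zerov" using wp k by (auto simp: zerov_def)
    have ab: "\<bar>r k - c\<bar> = \<bar>r k\<bar> - 1" using k by (auto simp: c_def sgn_if)
    have nw: "nrm m w = nrm m r - 1" unfolding w_def using nrm_upd[OF k(1)] ab by simp
    have n1: "nrm m r \<ge> 1" using nw nrm_nonneg[of m w] by simp
    have "mu m w < mu m r" using True nw n1 by (simp add: mu_def) arith
    then have hw: "(hb w :: _ \<Rightarrow> 'a) \<in> ?L" using IH wl wz by blast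
    have om: "om m (vsmult c (unitv k)) w \<noteq> 0"
      using om_unit[OF k(1)] wp k c sg_ne[of m k] by auto
    have "vadd (vsmult c (unitv k)) w = r"
      by (auto simp: vadd_def vsmult_def unitv_def w_def)
    then show ?thesis using close[OF gs hw om] by simp
  next
    case False
    then have unp: "\<And>j. j<2*m \<Longrightarrow> r j \<noteq> 0 \<Longrightarrow> r (pt m j) = 0" by (auto simp: paired_def)
    define p where "p = pt m k"
    have p: "p < 2*m" "p \<noteq> k" "pt m p = k" "r p = 0" "sg m p = - sg m k"
      using pt_lt[OF k(1)] pt_ne[OF k(1)] pt_pt[OF k(1)] unp[OF k] sg_pt[OF k(1)] by (auto simp: p_def)
    have "\<bar>r k\<bar> \<ge> 2 \<or> (\<bar>r k\<bar> = 1 \<and> (\<exists>l<2*m. l \<noteq> k \<and> r l \<noteq> 0)) \<or> (\<bar>r k\<bar> = 1 \<and> (\<forall>l<2*m. l \<noteq> k \<longrightarrow> r l = 0))"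
      using k by auto
    then consider (A) "\<bar>r k\<bar> \<ge> 2" | (B) l where "l<2*m" "l\<noteq>k" "r l \<noteq> 0" "\<bar>r k\<bar> = 1"
      | (C) "\<bar>r k\<bar> = 1" "\<forall>l<2*m. l \<noteq> k \<longrightarrow> r l = 0" by blast
    then show ?thesis
    proof cases
      case A
      define c where "c = sgn (r k)"
      have c: "c \<in> {1,-1}" using k by (auto simp: c_def sgn_if)
      define v where "v = vadd (vsmult c (unitv k)) (vsmult (-1) (unitv p))"
      define w where "w = r(k := r k - c, p := 1)"
      have hv: "(hb v :: _ \<Rightarrow> 'a) \<in> ?L" unfolding v_def using c p k by (intro gen2) auto
      have wl: "w \<in> lat m" unfolding w_def using rl k p by (intro lat_upd) auto
      have wp: "w p = 1" "w k = r k - c" using p by (auto simp: w_def)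
      have wz: "w \<noteq> zerov" using wp(1) by (auto simp: zerov_def fun_eq_iff intro: exI[of _ p])
      have ab: "\<bar>r k - c\<bar> = \<bar>r k\<bar> - 1" using k by (auto simp: c_def sgn_if)
      have wpair: "paired m w" unfolding paired_def using wp k A ab p
        by (intro exI[of _ k]) (auto simp: p_def)
      have nw: "nrm m w = nrm m r" unfolding w_def
        using nrm_upd[OF p(1), of "r(k := r k - c)" 1] nrm_upd[OF k(1), of r "r k - c"] ab p by simp
      have "mu m w < mu m r" using False wpair nw by (simp add: mu_def)
      then have hw: "(hb w :: _ \<Rightarrow> 'a) \<in> ?L" using IH wl wz by blast
      have om: "om m v w \<noteq> 0"
      proof -
        have e: "om m v w = r k * sg m k"
          unfolding v_def om_add om_unit[OF k(1)] om_unit[OF p(1)] using wp p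
          by (simp add: p_def[symmetric] algebra_simps flip: distrib_right)
        show ?thesis unfolding e using k sg_ne[of m k] by simp
      qed
      have "vadd v w = r"
        using p by (auto simp: vadd_def vsmult_def unitv_def w_def v_def fun_eq_iff)
      then show ?thesis using close[OF hv hw om] by simp
    next
      case B
      define c where "c = r k"
      have c: "c \<in> {1,-1}" using B by (auto simp: c_def abs_if split: if_splits)
      define b where "b = sgn (r l)"
      have b: "b \<in> {1,-1}" using B by (auto simp: b_def sgn_if)
      have lp: "l \<noteq> p" using B p by auto
      have pl: "pt m l < 2*m" "pt m l \<noteq> l" "pt m l \<noteq> k" "pt m l \<noteq> p" "r (pt m l) = 0"
        using pt_lt[OF B(1)] pt_ne[OF B(1)] pt_pt[OF B(1)] unp[OF B(1) B(3)] lp B(2) p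
        by (metis p_def)+
      define g where "g = vadd (vsmult b (unitv l)) (vsmult (-1) (unitv p))"
      have hg: "(hb g :: _ \<Rightarrow> 'a) \<in> ?L" unfolding g_def using b p B lp by (intro gen2) auto
      have hck: "(hb (vsmult c (unitv k)) :: _ \<Rightarrow> 'a) \<in> ?L" by (rule gen1[OF c k(1)])
      have gp: "g p = -1" using lp by (auto simp: g_def vadd_def vsmult_def unitv_def)
      have omg: "om m (vsmult c (unitv k)) g \<noteq> 0"
        unfolding om_unit[OF k(1)] using gp c sg_ne[of m k] by (auto simp: p_def)
      define v where "v = vadd (vsmult c (unitv k)) g"
      have hv: "(hb v :: _ \<Rightarrow> 'a) \<in> ?L" unfolding v_def by (rule close[OF hck hg omg])
      define w where "w = r(k := 0, l := r l - b, p := 1)"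
      have wl: "w \<in> lat m" unfolding w_def using rl k p B by (intro lat_upd) auto
      have wp: "w p = 1" "w k = 0" "w (pt m l) = 0" using p pl B lp by (auto simp: w_def)
      have wz: "w \<noteq> zerov" using wp(1) by (auto simp: zerov_def fun_eq_iff intro: exI[of _ p])
      have ab: "\<bar>r l - b\<bar> = \<bar>r l\<bar> - 1" using B by (auto simp: b_def sgn_if)
      have nw: "nrm m w = nrm m r - 1" unfolding w_def
        using nrm_upd[OF p(1), of "r(k := 0, l := r l - b)" 1] nrm_upd[OF B(1), of "r(k := 0)" "r l - b"]
          nrm_upd[OF k(1), of r 0] ab p B lp by simp
      have "mu m w < mu m r" using False nw nrm_nonneg[of m w] by (simp add: mu_def) arith
      then have hw: "(hb w :: _ \<Rightarrow> 'a) \<in> ?L" using IH wl wz by blast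
      have om: "om m v w \<noteq> 0"
      proof -
        have q: "pt m k = p" "pt m p = k" "sg m p = - sg m k" using p by (auto simp: p_def)
        have e: "om m v w = c * sg m k"
          unfolding v_def g_def om_add om_unit[OF k(1)] om_unit[OF p(1)] om_unit[OF B(1)]
          unfolding q using wp by simp
        show ?thesis unfolding e using c sg_ne[of m k] by auto
      qed
      have "vadd v w = r"
        using p B lp by (auto simp: vadd_def vsmult_def unitv_def w_def v_def g_def c_def fun_eq_iff)
      then show ?thesis using close[OF hv hw om] by simp
    next
      case C
      have c: "r k \<in> {1,-1}" using C by (auto simp: abs_if split: if_splits)
      have "r = vsmult (r k) (unitv k)"
      proof
        fix i show "r i = vsmult (r k) (unitv k) i"
          using C rl by (cases "i < 2*m") (auto simp: vsmult_def unitv_def lat_def)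
      qed
      then show ?thesis using gen1[OF c k(1)] by simp
    qed
  qed
qed

lemma gens_sub: "x \<in> gens m \<Longrightarrow> (x :: _ \<Rightarrow> 'a::field) \<in> hamH m"
proof -
  assume "x \<in> gens m"
  then obtain v where x: "x = hb v" and vl: "v \<in> lat m" and vz: "v \<noteq> zerov"
  proof (unfold gens_def, elim UnE CollectE exE conjE)
    fix a i assume h: "x = hb (vsmult a (unitv i))" "a \<in> {1, -1}" "i < 2*m"
      and th: "\<And>v. x = hb v \<Longrightarrow> v \<in> lat m \<Longrightarrow> v \<noteq> zerov \<Longrightarrow> thesis"
    show thesis
    proof (rule th[OF h(1)])
      show "vsmult a (unitv i) \<in> lat m" using h by (auto simp: lat_def vsmult_def unitv_def)
      show "vsmult a (unitv i) \<noteq> zerov" using h by (auto simp: zerov_def vsmult_def unitv_def fun_eq_iff)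
    qed
  next
    fix a b j k assume h: "x = hb (vadd (vsmult a (unitv j)) (vsmult b (unitv k)))" "a \<in> {1, -1}"
      "b \<in> {1, -1}" "j < k" "k < 2*m"
      and th: "\<And>v. x = hb v \<Longrightarrow> v \<in> lat m \<Longrightarrow> v \<noteq> zerov \<Longrightarrow> thesis"
    show thesis
    proof (rule th[OF h(1)])
      show "vadd (vsmult a (unitv j)) (vsmult b (unitv k)) \<in> lat m"
        using h by (auto simp: lat_def vadd_def vsmult_def unitv_def)
      have "vadd (vsmult a (unitv j)) (vsmult b (unitv k)) j \<noteq> 0"
        using h by (auto simp: vadd_def vsmult_def unitv_def)
      then show "vadd (vsmult a (unitv j)) (vsmult b (unitv k)) \<noteq> zerov"
        by (auto simp: zerov_def)
    qed
  qed
  have "{r. (hb v :: _ \<Rightarrow> 'a) r \<noteq> 0} = {v}" by (auto simp: hb_def)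
  then show ?thesis using x vl vz by (auto simp: hamH_def hb_def)
qed

lemma lat_vadd: "r \<in> lat m \<Longrightarrow> s \<in> lat m \<Longrightarrow> vadd r s \<in> lat m"
  by (auto simp: lat_def vadd_def)

lemma bracket_sub:
  assumes x: "(x :: _ \<Rightarrow> 'a::field) \<in> hamH m" and y: "y \<in> hamH m"
  shows "hbr m x y \<in> hamH m"
proof -
  let ?X = "{r. x r \<noteq> 0}" and ?Y = "{s. y s \<noteq> 0}"
  have fx: "finite ?X" and fy: "finite ?Y" using x y by (auto simp: hamH_def)
  have key: "\<exists>r s. x r \<noteq> 0 \<and> y s \<noteq> 0 \<and> vadd r s = t \<and> om m r s \<noteq> 0" if "hbr m x y t \<noteq> 0" for t
  proof -
    from that obtain p where "p \<in> {(r, s). x r \<noteq> 0 \<and> y s \<noteq> 0 \<and> vadd r s = t}"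
        "of_int (bil m (Jb m (fst p)) (snd p)) * x (fst p) * y (snd p) \<noteq> 0"
      unfolding hbr_def by (meson sum.neutral)
    then show ?thesis
    proof (cases p)
      case (Pair a b)
      assume h: "p \<in> {(r, s). x r \<noteq> 0 \<and> y s \<noteq> 0 \<and> vadd r s = t}"
        "of_int (bil m (Jb m (fst p)) (snd p)) * x (fst p) * y (snd p) \<noteq> 0"
      have "bil m (Jb m a) b \<noteq> 0" using h(2) Pair by (metis fst_conv snd_conv of_int_0 mult_zero_left)
      then show ?thesis using h(1) Pair by (auto simp: om_def)
    qed
  qed
  have "{t. hbr m x y t \<noteq> 0} \<subseteq> (\<lambda>(r, s). vadd r s) ` (?X \<times> ?Y)"
    using key by fastforce
  then have fin: "finite {t. hbr m x y t \<noteq> 0}"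
    using fx fy by (meson finite_SigmaI finite_imageI finite_subset)
  have "t \<in> lat m \<and> t \<noteq> zerov" if nz: "hbr m x y t \<noteq> 0" for t
  proof -
    obtain r s where rs: "x r \<noteq> 0" "y s \<noteq> 0" "vadd r s = t" "om m r s \<noteq> 0" using key[OF nz] by blast
    have "r \<in> lat m" "s \<in> lat m" using rs x y by (auto simp: hamH_def)
    then have "t \<in> lat m" using rs lat_vadd by blast
    moreover have "t \<noteq> zerov"
    proof
      assume "t = zerov"
      then have "s = (\<lambda>i. - r i)" using rs(3) by (auto simp: zerov_def vadd_def fun_eq_iff eq_neg_iff_add_eq_0 add.commute)
      then show False using rs(4) om_neg_self by simp
    qed
    ultimately show ?thesis by simp
  qed
  then show ?thesis using fin by (auto simp: hamH_def)
qed

lemma lie_sub: "x \<in> lie_gen m (gens m) \<Longrightarrow> (x :: _ \<Rightarrow> 'a::field) \<in> hamH m"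
proof (induction rule: lie_gen.induct)
  case (base x) then show ?case by (rule gens_sub)
next
  case zero then show ?case by (auto simp: hamH_def)
next
  case (add x y)
  have "{r. x r + y r \<noteq> 0} \<subseteq> {r. x r \<noteq> 0} \<union> {r. y r \<noteq> 0}" by auto
  moreover have "finite ({r. x r \<noteq> 0} \<union> {r. y r \<noteq> 0})" using add by (auto simp: hamH_def)
  ultimately have "finite {r. x r + y r \<noteq> 0}" by (rule finite_subset)
  moreover have "\<forall>r. x r + y r \<noteq> 0 \<longrightarrow> r \<in> lat m \<and> r \<noteq> zerov"
  proof (intro allI impI)
    fix r assume "x r + y r \<noteq> 0"
    then have "x r \<noteq> 0 \<or> y r \<noteq> 0" by auto
    then show "r \<in> lat m \<and> r \<noteq> zerov" using add by (auto simp: hamH_def)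
  qed
  ultimately show ?case by (simp add: hamH_def)
next
  case (smult x c)
  have "{r. c * x r \<noteq> 0} \<subseteq> {r. x r \<noteq> 0}" by auto
  then have "finite {r. c * x r \<noteq> 0}" using smult by (auto simp: hamH_def intro: finite_subset)
  then show ?case using smult by (auto simp: hamH_def)
next
  case (bracket x y) then show ?case by (blast intro: bracket_sub)
qed

theorem lemma4p1:
  fixes m :: nat
  assumes "1 \<le> m"
    and "\<forall>p :: 'a::field_char_0 poly. 0 < degree p \<longrightarrow> (\<exists>x. poly p x = 0)"
  shows "lie_gen m (gens m) = (hamH m :: ((nat \<Rightarrow> int) \<Rightarrow> 'a) set)"
proof
  show "lie_gen m (gens m) \<subseteq> (hamH m :: ((nat \<Rightarrow> int) \<Rightarrow> 'a) set)" using lie_sub by blast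
  show "(hamH m :: ((nat \<Rightarrow> int) \<Rightarrow> 'a) set) \<subseteq> lie_gen m (gens m)"
  proof
    fix f :: "(nat \<Rightarrow> int) \<Rightarrow> 'a" assume f: "f \<in> hamH m"
    show "f \<in> lie_gen m (gens m)"
    proof (rule span)
      show "finite {r. f r \<noteq> 0}" using f by (simp add: hamH_def)
      show "\<forall>r\<in>{r. f r \<noteq> 0}. (hb r :: _ \<Rightarrow> 'a) \<in> lie_gen m (gens m)"
        using f main by (auto simp: hamH_def)
    qed simp
  qed
qed

end
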